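(* Let $(X,\langle\cdot|\cdot\rangle)$, $A$, $B$, $C$, $Y$, $H$, $\hat B$, $V$ be as in the context, and let $\lambda\in\mathbb{C}$. Consider $A+C-\lambda B-\lambda^2$ as an operator with domain $D(A)$. (i) $H+\hat B+V-\lambda$ is not injective if and only if $A+C-\lambda B-\lambda^2$ is not injective; in that case $\ker(H+\hat B+V-\lambda)=\{(\xi,i\lambda\xi):\xi\in\ker(A+C-\lambda B-\lambda^2)\}$. (ii) $H+\hat B+V-\lambda$ is bijective if and only if $A+C-\lambda B-\lambda^2$ is bijective; in that case, for all $\eta=(\eta_1,\eta_2)\in Y$, $(H+\hat B+V-\lambda)^{-1}\eta=(\xi,i(\lambda\xi+\eta_1))$ where $\xi=(A+C-\lambda B-\lambda^2)^{-1}[(B+\lambda)\eta_1-i\eta_2]$.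
   Context: $(X,\langle\cdot|\cdot\rangle)$ is a nontrivial complex Hilbert space with norm $\|\cdot\|$. $A:D(A)\to X$ is a densely defined self-adjoint linear operator with $\langle\xi|A\xi\rangle\geqslant\varepsilon\langle\xi|\xi\rangle$ for all $\xi\in D(A)$ for some $\varepsilon>0$; $A^{1/2}$ is its positive self-adjoint square root. $B:D(A^{1/2})\to X$ is linear with $\|B\xi\|^2\leqslant a^2\|A^{1/2}\xi\|^2+b^2\|\xi\|^2$ for all $\xi\in D(A^{1/2})$, for some $a\in[0,1)$, $b\in\mathbb{R}$, and $B$ is symmetric or bounded. $C:D(A^{1/2})\to X$ is linear with $\|C\xi\|^2\leqslant c^2\|A^{1/2}\xi\|^2+d^2\|\xi\|^2$ for all $\xi\in D(A^{1/2})$, for some real $c,d$. $Y:=D(A^{1/2})\times X$ with inner product $(\xi|\eta):=\langle A^{1/2}\xi_1|A^{1/2}\eta_1\rangle+\langle\xi_2|\eta_2\rangle$. $H:D(A)\times D(A^{1/2})\to Y$, $H\xi:=(-i\xi_2,iA\xi_1)$; $\hat B:D(H)\to Y$, $\hat B\xi:=(0,-B\xi_2)$; $V:Y\to Y$, $V\xi:=(0,iC\xi_1)$; $H+\hat B+V-\lambda$ has domain $D(H)$. *)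

theory Defs
  imports Complex_Main
begin

class complex_vector = ab_group_add +
  fixes scaleC :: "complex \<Rightarrow> 'a \<Rightarrow> 'a" (infixr "*\<^sub>C" 75)
  assumes scaleC_add_right: "c *\<^sub>C (x + y) = c *\<^sub>C x + c *\<^sub>C y"
    and scaleC_add_left: "(c + d) *\<^sub>C x = c *\<^sub>C x + d *\<^sub>C x"
    and scaleC_scaleC: "c *\<^sub>C (d *\<^sub>C x) = (c * d) *\<^sub>C x"
    and scaleC_one: "1 *\<^sub>C x = x"

definition ipnorm :: "('a \<Rightarrow> 'a \<Rightarrow> complex) \<Rightarrow> 'a \<Rightarrow> real" where
  "ipnorm ip x = sqrt (Re (ip x x))"

definition complex_hilbert :: "('a::complex_vector \<Rightarrow> 'a \<Rightarrow> complex) \<Rightarrow> bool" where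
  "complex_hilbert ip \<longleftrightarrow>
     (\<forall>x y z. ip x (y + z) = ip x y + ip x z) \<and>
     (\<forall>x y c. ip x (c *\<^sub>C y) = c * ip x y) \<and>
     (\<forall>x y. ip y x = cnj (ip x y)) \<and>
     (\<forall>x. Re (ip x x) \<ge> 0) \<and>
     (\<forall>x. ip x x = 0 \<longrightarrow> x = 0) \<and>
     (\<forall>f :: nat \<Rightarrow> 'a.
        (\<forall>e>0. \<exists>N. \<forall>m\<ge>N. \<forall>n\<ge>N. ipnorm ip (f m - f n) < e) \<longrightarrow>
        (\<exists>l. \<forall>e>0. \<exists>N. \<forall>n\<ge>N. ipnorm ip (f n - l) < e))"

definition csubspace :: "'a::complex_vector set \<Rightarrow> bool" where
  "csubspace D \<longleftrightarrow> 0 \<in> D \<and> (\<forall>x\<in>D. \<forall>y\<in>D. x + y \<in> D) \<and> (\<forall>c. \<forall>x\<in>D. c *\<^sub>C x \<in> D)"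

definition clinear_on :: "'a::complex_vector set \<Rightarrow> ('a \<Rightarrow> 'b::complex_vector) \<Rightarrow> bool" where
  "clinear_on D f \<longleftrightarrow> csubspace D \<and>
     (\<forall>x\<in>D. \<forall>y\<in>D. f (x + y) = f x + f y) \<and> (\<forall>c. \<forall>x\<in>D. f (c *\<^sub>C x) = c *\<^sub>C f x)"

definition dense_in :: "('a::complex_vector \<Rightarrow> 'a \<Rightarrow> complex) \<Rightarrow> 'a set \<Rightarrow> bool" where
  "dense_in ip D \<longleftrightarrow> (\<forall>x. \<forall>e>0. \<exists>y\<in>D. ipnorm ip (x - y) < e)"

definition selfadjoint_op :: "('a::complex_vector \<Rightarrow> 'a \<Rightarrow> complex) \<Rightarrow> 'a set \<Rightarrow> ('a \<Rightarrow> 'a) \<Rightarrow> bool" where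
  "selfadjoint_op ip D A \<longleftrightarrow> clinear_on D A \<and> dense_in ip D \<and>
     (\<forall>\<eta> \<zeta>. (\<forall>\<xi>\<in>D. ip (A \<xi>) \<eta> = ip \<xi> \<zeta>) \<longleftrightarrow> (\<eta> \<in> D \<and> \<zeta> = A \<eta>))"

definition pos_sqrt_op :: "('a::complex_vector \<Rightarrow> 'a \<Rightarrow> complex) \<Rightarrow> 'a set \<Rightarrow> ('a \<Rightarrow> 'a)
     \<Rightarrow> 'a set \<Rightarrow> ('a \<Rightarrow> 'a) \<Rightarrow> bool" where
  "pos_sqrt_op ip D A DS S \<longleftrightarrow> selfadjoint_op ip DS S \<and>
     (\<forall>x\<in>DS. Im (ip x (S x)) = 0 \<and> Re (ip x (S x)) \<ge> 0) \<and>
     D = {x \<in> DS. S x \<in> DS} \<and> (\<forall>x\<in>D. S (S x) = A x)"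

text \<open>H + hat B + V - lambda on D(H) = D(A) x D(A^(1/2)), with
  H xi = (-i xi2, i A xi1), hat B xi = (0, - B xi2), V xi = (0, i C xi1).\<close>
definition HBV_op :: "('a::complex_vector \<Rightarrow> 'a) \<Rightarrow> ('a \<Rightarrow> 'a) \<Rightarrow> ('a \<Rightarrow> 'a) \<Rightarrow> complex
     \<Rightarrow> 'a \<times> 'a \<Rightarrow> 'a \<times> 'a" where
  "HBV_op A B C lam \<xi> =
     ((- \<i>) *\<^sub>C snd \<xi> - lam *\<^sub>C fst \<xi>,
      \<i> *\<^sub>C A (fst \<xi>) + (- B (snd \<xi>)) + \<i> *\<^sub>C C (fst \<xi>) - lam *\<^sub>C snd \<xi>)"

definition pencil_op :: "('a::complex_vector \<Rightarrow> 'a) \<Rightarrow> ('a \<Rightarrow> 'a) \<Rightarrow> ('a \<Rightarrow> 'a) \<Rightarrow> complex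
     \<Rightarrow> 'a \<Rightarrow> 'a" where
  "pencil_op A B C lam \<xi> = A \<xi> + C \<xi> - lam *\<^sub>C B \<xi> - (lam^2) *\<^sub>C \<xi>"

end

theory Submission imports Defs begin

lemma sc0r[simp]: "c *\<^sub>C (0::'a::complex_vector) = 0"
proof -
  have "c *\<^sub>C (0::'a::complex_vector) = c *\<^sub>C 0 + c *\<^sub>C 0" using scaleC_add_right[of c 0 0] by (simp only: add_0_right)
  thus ?thesis by (simp only: add_cancel_right_right)
qed
lemma sc0l[simp]: "(0::complex) *\<^sub>C (x::'a::complex_vector) = 0"
proof -
  have "(0::complex) *\<^sub>C x = 0 *\<^sub>C x + 0 *\<^sub>C x" using scaleC_add_left[of 0 0 x] by simp
  thus ?thesis by (simp only: add_cancel_right_right)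
qed
lemma scmr[simp]: "c *\<^sub>C (- (x::'a::complex_vector)) = - (c *\<^sub>C x)"
proof -
  have "c *\<^sub>C (- x) + c *\<^sub>C x = c *\<^sub>C (- x + x)" by (simp only: scaleC_add_right)
  also have "\<dots> = 0" by (simp only: add.left_inverse sc0r)
  finally show ?thesis by (simp only: eq_neg_iff_add_eq_0)
qed
lemma scml[simp]: "(- c) *\<^sub>C (x::'a::complex_vector) = - (c *\<^sub>C x)"
proof -
  have "(- c) *\<^sub>C x + c *\<^sub>C x = (- c + c) *\<^sub>C x" by (simp only: scaleC_add_left)
  also have "\<dots> = 0" by (simp only: add.left_inverse sc0l)
  finally show ?thesis by (simp only: eq_neg_iff_add_eq_0)
qed
lemma scdr: "c *\<^sub>C ((x::'a::complex_vector) - y) = c *\<^sub>C x - c *\<^sub>C y"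
  by (simp only: diff_conv_add_uminus scaleC_add_right scmr)
lemma scdl: "(c - d) *\<^sub>C (x::'a::complex_vector) = c *\<^sub>C x - d *\<^sub>C x"
  by (simp only: diff_conv_add_uminus scaleC_add_left scml)

lemma ii1: "(- \<i>) *\<^sub>C (\<i> *\<^sub>C (x::'a::complex_vector)) = x"
  by (simp only: scaleC_scaleC) (simp add: scaleC_one)
lemma ii2: "\<i> *\<^sub>C ((- \<i>) *\<^sub>C (x::'a::complex_vector)) = x"
  by (simp only: scaleC_scaleC) (simp add: scaleC_one)

lemma iscale_iff: "\<i> *\<^sub>C (x::'a::complex_vector) = y \<longleftrightarrow> x = (- \<i>) *\<^sub>C y"
proof
  assume "\<i> *\<^sub>C x = y" thus "x = (- \<i>) *\<^sub>C y" using ii1[of x] by simp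
next
  assume "x = (- \<i>) *\<^sub>C y" thus "\<i> *\<^sub>C x = y" using ii2[of y] by simp
qed

lemma char:
  fixes A B C :: "'a::complex_vector \<Rightarrow> 'a"
  assumes B: "clinear_on DS B" and x1: "x1 \<in> DS" and y1: "y1 \<in> DS"
  shows "HBV_op A B C lam (x1, x2) = (y1, y2) \<longleftrightarrow>
     x2 = \<i> *\<^sub>C (lam *\<^sub>C x1 + y1) \<and>
     pencil_op A B C lam x1 = B y1 + lam *\<^sub>C y1 - \<i> *\<^sub>C y2"
proof -
  have sub: "csubspace DS" using B by (simp add: clinear_on_def)
  have scD: "\<And>c x. x \<in> DS \<Longrightarrow> c *\<^sub>C x \<in> DS" using sub unfolding csubspace_def by blast
  have addB: "\<And>x y. x \<in> DS \<Longrightarrow> y \<in> DS \<Longrightarrow> B (x + y) = B x + B y"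
    using B unfolding clinear_on_def by blast
  have scB: "\<And>c x. x \<in> DS \<Longrightarrow> B (c *\<^sub>C x) = c *\<^sub>C B x"
    using B unfolding clinear_on_def by blast
  have e1: "(- \<i>) *\<^sub>C x2 - lam *\<^sub>C x1 = y1 \<longleftrightarrow> x2 = \<i> *\<^sub>C (lam *\<^sub>C x1 + y1)"
  proof
    assume h: "(- \<i>) *\<^sub>C x2 - lam *\<^sub>C x1 = y1"
    hence h2: "(- \<i>) *\<^sub>C x2 = lam *\<^sub>C x1 + y1" by (simp only: diff_eq_eq add.commute[of y1])
    show "x2 = \<i> *\<^sub>C (lam *\<^sub>C x1 + y1)"
      using ii2[of x2] unfolding h2 by (rule sym)
  next
    assume h: "x2 = \<i> *\<^sub>C (lam *\<^sub>C x1 + y1)"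
    have "(- \<i>) *\<^sub>C x2 = lam *\<^sub>C x1 + y1"
      unfolding h by (rule ii1)
    thus "(- \<i>) *\<^sub>C x2 - lam *\<^sub>C x1 = y1" unfolding diff_eq_eq by (simp only: add.commute[of y1])
  qed
  have HBVe: "HBV_op A B C lam (x1, x2) = ((- \<i>) *\<^sub>C x2 - lam *\<^sub>C x1,
      \<i> *\<^sub>C A x1 + - B x2 + \<i> *\<^sub>C C x1 - lam *\<^sub>C x2)"
    unfolding HBV_op_def fst_conv snd_conv by (rule refl)
  show ?thesis
  proof (cases "x2 = \<i> *\<^sub>C (lam *\<^sub>C x1 + y1)")
    case False thus ?thesis using e1 unfolding HBVe prod.inject by blast
  next
    case True
    have m1: "(\<i> * lam) *\<^sub>C x1 \<in> DS" "\<i> *\<^sub>C y1 \<in> DS" using scD x1 y1 by blast+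
    have x2e: "x2 = (\<i> * lam) *\<^sub>C x1 + \<i> *\<^sub>C y1" using True by (simp only: scaleC_add_right scaleC_scaleC)
    have Bx2: "B x2 = (\<i> * lam) *\<^sub>C B x1 + \<i> *\<^sub>C B y1"
      unfolding x2e by (simp only: addB[OF m1] scB[OF x1] scB[OF y1])
    have sndE: "\<i> *\<^sub>C A x1 + - B x2 + \<i> *\<^sub>C C x1 - lam *\<^sub>C x2
        = \<i> *\<^sub>C (pencil_op A B C lam x1 - (B y1 + lam *\<^sub>C y1))"
    proof -
      have c1: "lam * (\<i> * lam) = \<i> * lam^2" "lam * \<i> = \<i> * lam"
        by (simp_all add: power2_eq_square)
      show ?thesis
      unfolding Bx2 unfolding x2e pencil_op_def
      apply (simp only: scdr scaleC_add_right scaleC_scaleC scmr c1)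
      by (simp only: diff_conv_add_uminus minus_add_distrib add_ac)
    qed
    have iffE: "\<i> *\<^sub>C (pencil_op A B C lam x1 - (B y1 + lam *\<^sub>C y1)) = y2 \<longleftrightarrow>
        pencil_op A B C lam x1 = B y1 + lam *\<^sub>C y1 - \<i> *\<^sub>C y2"
      unfolding iscale_iff scml diff_eq_eq by (simp only: add.commute diff_conv_add_uminus)
    have fstE: "(- \<i>) *\<^sub>C x2 - lam *\<^sub>C x1 = y1" using e1 True by blast
    show ?thesis unfolding HBVe prod.inject sndE iffE using fstE True by blast
  qed
qed
theorem theorem13:
  fixes ip :: "'a::complex_vector \<Rightarrow> 'a \<Rightarrow> complex"
    and DA DS :: "'a set"
    and A S B C :: "'a \<Rightarrow> 'a"
    and \<epsilon> a b c d :: real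
    and lam :: complex
  assumes hilb: "complex_hilbert ip"
    and nontriv: "\<exists>x::'a. x \<noteq> 0"
    and A_sa: "selfadjoint_op ip DA A"
    and eps: "\<epsilon> > 0"
    and A_pos: "\<forall>\<xi>\<in>DA. Im (ip \<xi> (A \<xi>)) = 0 \<and> Re (ip \<xi> (A \<xi>)) \<ge> \<epsilon> * Re (ip \<xi> \<xi>)"
    and S_sqrt: "pos_sqrt_op ip DA A DS S"
    and B_lin: "clinear_on DS B"
    and a_range: "0 \<le> a" "a < 1"
    and B_bound: "\<forall>\<xi>\<in>DS. (ipnorm ip (B \<xi>))^2 \<le> a^2 * (ipnorm ip (S \<xi>))^2 + b^2 * (ipnorm ip \<xi>)^2"
    and B_sym_or_bdd: "(\<forall>\<xi>\<in>DS. \<forall>\<eta>\<in>DS. ip (B \<xi>) \<eta> = ip \<xi> (B \<eta>))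
                       \<or> (\<exists>K. \<forall>\<xi>\<in>DS. ipnorm ip (B \<xi>) \<le> K * ipnorm ip \<xi>)"
    and C_lin: "clinear_on DS C"
    and C_bound: "\<forall>\<xi>\<in>DS. (ipnorm ip (C \<xi>))^2 \<le> c^2 * (ipnorm ip (S \<xi>))^2 + d^2 * (ipnorm ip \<xi>)^2"
  shows "((\<not> inj_on (HBV_op A B C lam) (DA \<times> DS)) \<longleftrightarrow> (\<not> inj_on (pencil_op A B C lam) DA))
       \<and> ((\<not> inj_on (pencil_op A B C lam) DA) \<longrightarrow>
            {\<xi> \<in> DA \<times> DS. HBV_op A B C lam \<xi> = (0, 0)}
              = {(\<xi>, (\<i> * lam) *\<^sub>C \<xi>) | \<xi>. \<xi> \<in> DA \<and> pencil_op A B C lam \<xi> = 0})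
       \<and> (bij_betw (HBV_op A B C lam) (DA \<times> DS) (DS \<times> UNIV) \<longleftrightarrow> bij_betw (pencil_op A B C lam) DA UNIV)
       \<and> (bij_betw (pencil_op A B C lam) DA UNIV \<longrightarrow>
            (\<forall>\<eta>\<in>DS \<times> UNIV.
               the_inv_into (DA \<times> DS) (HBV_op A B C lam) \<eta> =
                 (let \<xi> = the_inv_into DA (pencil_op A B C lam)
                            (B (fst \<eta>) + lam *\<^sub>C fst \<eta> - \<i> *\<^sub>C snd \<eta>)
                  in (\<xi>, \<i> *\<^sub>C (lam *\<^sub>C \<xi> + fst \<eta>)))))"
proof -
  let ?H = "HBV_op A B C lam" and ?P = "pencil_op A B C lam"
  have DAS: "DA \<subseteq> DS" using S_sqrt by (auto simp: pos_sqrt_op_def)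
  have sub: "csubspace DS" using B_lin by (simp add: clinear_on_def)
  have z0: "0 \<in> DS" and addD: "\<And>x y. x \<in> DS \<Longrightarrow> y \<in> DS \<Longrightarrow> x + y \<in> DS"
    and scD: "\<And>c x. x \<in> DS \<Longrightarrow> c *\<^sub>C x \<in> DS" using sub unfolding csubspace_def by blast+
  have B0: "B 0 = 0"
  proof -
    note z0
    have "\<forall>x\<in>DS. \<forall>y\<in>DS. B (x + y) = B x + B y" using B_lin by (simp add: clinear_on_def)
    hence "B (0 + 0) = B 0 + B 0" using z0 by blast
    thus ?thesis by simp
  qed
  have fstD: "fst (?H x) \<in> DS" if "x \<in> DA \<times> DS" for x
  proof -
    have "fst x \<in> DS" "snd x \<in> DS" using that DAS by auto
    hence "(- \<i>) *\<^sub>C snd x \<in> DS" "(- lam) *\<^sub>C fst x \<in> DS" using scD by blast+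
    hence "(- \<i>) *\<^sub>C snd x + (- lam) *\<^sub>C fst x \<in> DS" using addD by blast
    moreover have "fst (?H x) = (- \<i>) *\<^sub>C snd x + (- lam) *\<^sub>C fst x"
      by (simp only: HBV_op_def fst_conv diff_conv_add_uminus scml)
    ultimately show ?thesis by (simp only:)
  qed
  have ch: "?H (x1, x2) = (y1, y2) \<longleftrightarrow> x2 = \<i> *\<^sub>C (lam *\<^sub>C x1 + y1) \<and> ?P x1 = B y1 + lam *\<^sub>C y1 - \<i> *\<^sub>C y2"
    if "x1 \<in> DA" "y1 \<in> DS" for x1 x2 y1 y2
    by (rule char[OF B_lin subsetD[OF DAS that(1)] that(2)])
  have mem2: "\<i> *\<^sub>C (lam *\<^sub>C x1 + y1) \<in> DS" if "x1 \<in> DA" "y1 \<in> DS" for x1 y1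
    using that DAS addD scD by blast
  have ker: "?H (x1, x2) = (0, 0) \<longleftrightarrow> x2 = (\<i> * lam) *\<^sub>C x1 \<and> ?P x1 = 0" if "x1 \<in> DA" for x1 x2
    using ch[OF that z0, of x2 0] B0 by (simp add: scaleC_scaleC scaleC_one)
  have injeq: "inj_on ?H (DA \<times> DS) \<longleftrightarrow> inj_on ?P DA"
  proof
    assume inj: "inj_on ?H (DA \<times> DS)"
    show "inj_on ?P DA"
    proof (rule inj_onI)
      fix x y assume xy: "x \<in> DA" "y \<in> DA" "?P x = ?P y"
      have z: "(0::'a) \<in> DS" by (rule z0)
      have e: "?P v = B 0 + lam *\<^sub>C 0 - \<i> *\<^sub>C (\<i> *\<^sub>C ?P v)" for v
        using B0 by (simp add: scaleC_scaleC scaleC_one)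
      have h1: "?H (x, \<i> *\<^sub>C (lam *\<^sub>C x + 0)) = (0, \<i> *\<^sub>C ?P x)"
        by (subst ch[OF xy(1) z]) (rule conjI[OF refl e])
      have h2: "?H (y, \<i> *\<^sub>C (lam *\<^sub>C y + 0)) = (0, \<i> *\<^sub>C ?P x)"
        by (subst ch[OF xy(2) z]) (rule conjI[OF refl], unfold xy(3), rule e)
      have m1: "(x, \<i> *\<^sub>C (lam *\<^sub>C x + 0)) \<in> DA \<times> DS" using xy(1) mem2[OF xy(1) z] by (rule SigmaI)
      have m2: "(y, \<i> *\<^sub>C (lam *\<^sub>C y + 0)) \<in> DA \<times> DS" using xy(2) mem2[OF xy(2) z] by (rule SigmaI)
      have "(x, \<i> *\<^sub>C (lam *\<^sub>C x + 0)) = (y, \<i> *\<^sub>C (lam *\<^sub>C y + 0))"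
        using inj_onD[OF inj trans[OF h1 sym[OF h2]] m1 m2] .
      thus "x = y" by (rule Pair_inject)
    qed
  next
    assume inj: "inj_on ?P DA"
    show "inj_on ?H (DA \<times> DS)"
    proof (rule inj_onI)
      fix x y assume xy: "x \<in> DA \<times> DS" "y \<in> DA \<times> DS" "?H x = ?H y"
      obtain x1 x2 where x: "x = (x1, x2)" by (cases x)
      obtain y1 y2 where y: "y = (y1, y2)" by (cases y)
      obtain e1 e2 where e: "?H x = (e1, e2)" by (cases "?H x")
      have x1D: "x1 \<in> DA" using xy(1) unfolding x by blast
      have y1D: "y1 \<in> DA" using xy(2) unfolding y by blast
      have e1: "e1 \<in> DS" using fstD[OF xy(1)] unfolding e fst_conv .
      have ex: "?H (x1, x2) = (e1, e2)" using e unfolding x .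
      have ey: "?H (y1, y2) = (e1, e2)" using xy(3) e unfolding x y by (simp only:)
      have hx: "x2 = \<i> *\<^sub>C (lam *\<^sub>C x1 + e1) \<and> ?P x1 = B e1 + lam *\<^sub>C e1 - \<i> *\<^sub>C e2"
        using ex unfolding ch[OF x1D e1] .
      have hy: "y2 = \<i> *\<^sub>C (lam *\<^sub>C y1 + e1) \<and> ?P y1 = B e1 + lam *\<^sub>C e1 - \<i> *\<^sub>C e2"
        using ey unfolding ch[OF y1D e1] .
      have "?P x1 = ?P y1" using hx hy by (simp only:)
      hence xy1: "x1 = y1" using inj_onD[OF inj _ x1D y1D] by blast
      show "x = y" unfolding x y using hx hy xy1 by (simp only:)
    qed
  qed
  have part2: "{\<xi> \<in> DA \<times> DS. ?H \<xi> = (0, 0)}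
              = {(\<xi>, (\<i> * lam) *\<^sub>C \<xi>) | \<xi>. \<xi> \<in> DA \<and> ?P \<xi> = 0}"
  proof (intro set_eqI iffI)
    fix z assume "z \<in> {\<xi> \<in> DA \<times> DS. ?H \<xi> = (0, 0)}"
    then obtain x1 x2 where "z = (x1, x2)" "x1 \<in> DA" "?H (x1, x2) = (0, 0)" by auto
    thus "z \<in> {(\<xi>, (\<i> * lam) *\<^sub>C \<xi>) | \<xi>. \<xi> \<in> DA \<and> ?P \<xi> = 0}" using ker by auto
  next
    fix z assume "z \<in> {(\<xi>, (\<i> * lam) *\<^sub>C \<xi>) | \<xi>. \<xi> \<in> DA \<and> ?P \<xi> = 0}"
    then obtain x1 where z: "z = (x1, (\<i> * lam) *\<^sub>C x1)" "x1 \<in> DA" "?P x1 = 0" by auto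
    have "(\<i> * lam) *\<^sub>C x1 \<in> DS" using z(2) DAS scD by blast
    thus "z \<in> {\<xi> \<in> DA \<times> DS. ?H \<xi> = (0, 0)}" using z ker by auto
  qed
  have solve: "?H (x1, \<i> *\<^sub>C (lam *\<^sub>C x1 + fst \<eta>)) = \<eta>"
    if "\<eta> \<in> DS \<times> UNIV" "x1 \<in> DA" "?P x1 = B (fst \<eta>) + lam *\<^sub>C fst \<eta> - \<i> *\<^sub>C snd \<eta>" for \<eta> x1
  proof -
    obtain e1 e2 where eta: "\<eta> = (e1, e2)" by (cases \<eta>)
    have e1: "e1 \<in> DS" using that(1) unfolding eta by blast
    have "?P x1 = B e1 + lam *\<^sub>C e1 - \<i> *\<^sub>C e2" using that(3) unfolding eta fst_conv snd_conv .
    hence "?H (x1, \<i> *\<^sub>C (lam *\<^sub>C x1 + e1)) = (e1, e2)"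
      unfolding ch[OF that(2) e1] by (intro conjI refl)
    thus ?thesis unfolding eta fst_conv .
  qed
  have surjeq: "?H ` (DA \<times> DS) = DS \<times> UNIV \<longleftrightarrow> ?P ` DA = UNIV"
  proof
    assume h: "?H ` (DA \<times> DS) = DS \<times> UNIV"
    show "?P ` DA = UNIV"
    proof (intro set_eqI iffI)
      fix z :: 'a
      have "(0, \<i> *\<^sub>C z) \<in> DS \<times> UNIV" using z0 by blast
      hence "(0, \<i> *\<^sub>C z) \<in> ?H ` (DA \<times> DS)" unfolding h .
      then obtain p where p: "p \<in> DA \<times> DS" "(0, \<i> *\<^sub>C z) = ?H p" by (rule imageE)
      obtain x1 x2 where pe: "p = (x1, x2)" by (cases p)
      have x1: "x1 \<in> DA" using p(1) unfolding pe by blast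
      have x3: "?H (x1, x2) = (0, \<i> *\<^sub>C z)" using p(2) unfolding pe by (rule sym)
      have "?P x1 = B 0 + lam *\<^sub>C 0 - \<i> *\<^sub>C (\<i> *\<^sub>C z)" using x3 unfolding ch[OF x1 z0] by (rule conjunct2)
      also have "\<dots> = z" unfolding B0 sc0r scaleC_scaleC by (simp add: scaleC_one)
      finally have "?P x1 = z" .
      thus "z \<in> ?P ` DA" by (rule rev_image_eqI[OF x1 sym])
    next
      fix z :: 'a show "z \<in> UNIV" by (rule UNIV_I)
    qed
  next
    assume h: "?P ` DA = UNIV"
    show "?H ` (DA \<times> DS) = DS \<times> UNIV"
    proof (intro set_eqI iffI)
      fix \<eta> assume "\<eta> \<in> ?H ` (DA \<times> DS)"
      then obtain p where p: "p \<in> DA \<times> DS" "\<eta> = ?H p" by (rule imageE)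
      have "fst \<eta> \<in> DS" unfolding p(2) by (rule fstD[OF p(1)])
      thus "\<eta> \<in> DS \<times> UNIV" by (simp add: mem_Times_iff)
    next
      fix \<eta> :: "'a \<times> 'a" assume e: "\<eta> \<in> DS \<times> UNIV"
      have "B (fst \<eta>) + lam *\<^sub>C fst \<eta> - \<i> *\<^sub>C snd \<eta> \<in> ?P ` DA" unfolding h by (rule UNIV_I)
      then obtain x1 where x1: "x1 \<in> DA" "B (fst \<eta>) + lam *\<^sub>C fst \<eta> - \<i> *\<^sub>C snd \<eta> = ?P x1"
        by (rule imageE)
      have x1': "?P x1 = B (fst \<eta>) + lam *\<^sub>C fst \<eta> - \<i> *\<^sub>C snd \<eta>" using x1(2) by (rule sym)
      have "fst \<eta> \<in> DS" using e by (simp add: mem_Times_iff)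
      hence "(x1, \<i> *\<^sub>C (lam *\<^sub>C x1 + fst \<eta>)) \<in> DA \<times> DS" using mem2[OF x1(1)] x1(1) by blast
      moreover have "\<eta> = ?H (x1, \<i> *\<^sub>C (lam *\<^sub>C x1 + fst \<eta>))" using solve[OF e x1(1) x1'] by (rule sym)
      ultimately show "\<eta> \<in> ?H ` (DA \<times> DS)" by (rule rev_image_eqI)
    qed
  qed
  have bijeq: "bij_betw ?H (DA \<times> DS) (DS \<times> UNIV) \<longleftrightarrow> bij_betw ?P DA UNIV"
    unfolding bij_betw_def using injeq surjeq by blast
  have inv: "\<forall>\<eta>\<in>DS \<times> UNIV.
               the_inv_into (DA \<times> DS) ?H \<eta> =
                 (let \<xi> = the_inv_into DA ?P (B (fst \<eta>) + lam *\<^sub>C fst \<eta> - \<i> *\<^sub>C snd \<eta>)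
                  in (\<xi>, \<i> *\<^sub>C (lam *\<^sub>C \<xi> + fst \<eta>)))"
    if bP: "bij_betw ?P DA UNIV"
  proof
    fix \<eta> :: "'a \<times> 'a" assume e: "\<eta> \<in> DS \<times> UNIV"
    define x1 where "x1 = the_inv_into DA ?P (B (fst \<eta>) + lam *\<^sub>C fst \<eta> - \<i> *\<^sub>C snd \<eta>)"
    have iP: "inj_on ?P DA" using bP unfolding bij_betw_def by (rule conjunct1)
    have sP: "?P ` DA = UNIV" using bP unfolding bij_betw_def by (rule conjunct2)
    have tgt: "B (fst \<eta>) + lam *\<^sub>C fst \<eta> - \<i> *\<^sub>C snd \<eta> \<in> ?P ` DA" unfolding sP by (rule UNIV_I)
    have x1a: "x1 \<in> DA" unfolding x1_def by (rule the_inv_into_into[OF iP tgt subset_refl])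
    have x1b: "?P x1 = B (fst \<eta>) + lam *\<^sub>C fst \<eta> - \<i> *\<^sub>C snd \<eta>" unfolding x1_def by (rule f_the_inv_into_f[OF iP tgt])
    have iH: "inj_on ?H (DA \<times> DS)" using iP unfolding injeq .
    have "fst \<eta> \<in> DS" using e by (simp add: mem_Times_iff)
    hence m: "(x1, \<i> *\<^sub>C (lam *\<^sub>C x1 + fst \<eta>)) \<in> DA \<times> DS" using mem2[OF x1a] x1a by blast
    have "the_inv_into (DA \<times> DS) ?H \<eta> = (x1, \<i> *\<^sub>C (lam *\<^sub>C x1 + fst \<eta>))"
      by (rule the_inv_into_f_eq[OF iH solve[OF e x1a x1b] m])
    thus "the_inv_into (DA \<times> DS) ?H \<eta> =
                 (let \<xi> = the_inv_into DA ?P (B (fst \<eta>) + lam *\<^sub>C fst \<eta> - \<i> *\<^sub>C snd \<eta>)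
                  in (\<xi>, \<i> *\<^sub>C (lam *\<^sub>C \<xi> + fst \<eta>)))" unfolding Let_def x1_def .
  qed
  show ?thesis
    apply (intro conjI)
       apply (simp only: injeq)
      apply (intro impI, rule part2)
     apply (rule bijeq)
    apply (intro impI, erule inv)
    done
qed

end
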